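(* Let $v$ be a $C^2$ vector field on an open set $\Omega\subset\mathbb{R}^3$ with $1\mp|v|^2>0$ on $\Omega$ (for a fixed choice of sign), satisfying $\nabla\times\frac{v}{\sqrt{1\mp|v|^2}}=0$ on $\Omega$. Then on $\Omega$: (i) $(1\mp|v|^2)\,\nabla\times v\pm\big[\tfrac12\nabla|v|^2\big]\times v=0$; (ii) $v\cdot(\nabla\times v)=0$; (iii) $\nabla|v|^2\cdot(\nabla\times v)=0$; (iv) $\nabla\times v=\pm\,v\times(v\cdot\nabla)v$.
   Context: This is the curl equation of the "$v$ problem": for a solution $u$ of $\pm\nabla\cdot\frac{\nabla u}{\sqrt{1\pm|\nabla u|^2}}=3H$ on $\mathbb{R}^3$, $v:=\pm\frac{\nabla u}{\sqrt{1\pm|\nabla u|^2}}$ satisfies $\nabla\cdot v=3H$ and $\nabla\times\frac{v}{\sqrt{1\mp|v|^2}}=0$. The upper sign corresponds to the Euclidean, the lower to the Minkowskian setting. *)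

theory Defs
  imports "HOL-Analysis.Analysis"
begin

definition pdiff :: "3 \<Rightarrow> (real^3 \<Rightarrow> 'b::real_normed_vector) \<Rightarrow> real^3 \<Rightarrow> 'b" where
  "pdiff i f x = frechet_derivative f (at x) (axis i 1)"

definition C2_on :: "(real^3) set \<Rightarrow> (real^3 \<Rightarrow> 'b::real_normed_vector) \<Rightarrow> bool" where
  "C2_on \<Omega> f \<longleftrightarrow> f differentiable_on \<Omega>
     \<and> (\<forall>i. (pdiff i f) differentiable_on \<Omega>)
     \<and> (\<forall>i j. continuous_on \<Omega> (pdiff j (pdiff i f)))"

definition curl :: "(real^3 \<Rightarrow> real^3) \<Rightarrow> real^3 \<Rightarrow> real^3" where
  "curl F x = vector [pdiff 2 (\<lambda>y. F y $ 3) x - pdiff 3 (\<lambda>y. F y $ 2) x,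
                      pdiff 3 (\<lambda>y. F y $ 1) x - pdiff 1 (\<lambda>y. F y $ 3) x,
                      pdiff 1 (\<lambda>y. F y $ 2) x - pdiff 2 (\<lambda>y. F y $ 1) x]"

definition grad :: "(real^3 \<Rightarrow> real) \<Rightarrow> real^3 \<Rightarrow> real^3" where
  "grad g x = (\<chi> i. pdiff i g x)"

definition dir_deriv :: "real^3 \<Rightarrow> (real^3 \<Rightarrow> real^3) \<Rightarrow> real^3 \<Rightarrow> real^3" where
  "dir_deriv w F x = (\<Sum>i\<in>UNIV. (w $ i) *\<^sub>R pdiff i F x)"

end

theory Submission
  imports Defs
begin

lemma pdiff_eq: "(f has_derivative f') (at x) \<Longrightarrow> pdiff i f x = f' (axis i 1)"
  unfolding pdiff_def using frechet_derivative_at[of f f' x] by simp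

lemma alg:
  fixes a1 a2 a3 c1 c2 c3 G1 G2 G3 s g :: real
  assumes h1: "s * s = (1::real)" and h2: "g = 1 - s*(a1*a1+a2*a2+a3*a3)" and "g > 0"
    and "g*c1 + s*(G2*a3 - G3*a2) = 0"
    and "g*c2 + s*(G3*a1 - G1*a3) = 0"
    and "g*c3 + s*(G1*a2 - G2*a1) = 0"
    and "a1*c1+a2*c2+a3*c3 = 0"
  shows "c1 = s*(a1*a1+a2*a2+a3*a3)*c1 + s*(a2*G3 - a3*G2)"
  using assms by algebra

lemma alg_all:
  fixes a1 a2 a3 c1 c2 c3 G1 G2 G3 s g :: real
  assumes h1: "s * s = 1" and h2: "g = 1 - s*(a1*a1+a2*a2+a3*a3)" and "g > 0"
    and "g*c1 + s*(G2*a3 - G3*a2) = 0"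
    and "g*c2 + s*(G3*a1 - G1*a3) = 0"
    and "g*c3 + s*(G1*a2 - G2*a1) = 0"
  shows "a1*c1+a2*c2+a3*c3 = 0" "G1*c1+G2*c2+G3*c3 = 0"
proof -
  have "g*(a1*c1+a2*c2+a3*c3) = 0" using assms by algebra
  then show "a1*c1+a2*c2+a3*c3 = 0" using \<open>g>0\<close> by simp
  have "g*(G1*c1+G2*c2+G3*c3) = 0" using assms by algebra
  then show "G1*c1+G2*c2+G3*c3 = 0" using \<open>g>0\<close> by simp
qed

theorem mainTheorem2:
  fixes v :: "real^3 \<Rightarrow> real^3" and \<Omega> :: "(real^3) set" and s :: real
  assumes "open \<Omega>"
    and "s = 1 \<or> s = -1"
    and "C2_on \<Omega> v"
    and "\<forall>x\<in>\<Omega>. 1 - s * (norm (v x))\<^sup>2 > 0"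
    and "\<forall>x\<in>\<Omega>. curl (\<lambda>y. (1 / sqrt (1 - s * (norm (v y))\<^sup>2)) *\<^sub>R v y) x = 0"
  shows "\<forall>x\<in>\<Omega>.
      (1 - s * (norm (v x))\<^sup>2) *\<^sub>R curl v x
        + s *\<^sub>R cross3 ((1/2) *\<^sub>R grad (\<lambda>y. (norm (v y))\<^sup>2) x) (v x) = 0
    \<and> v x \<bullet> curl v x = 0
    \<and> grad (\<lambda>y. (norm (v y))\<^sup>2) x \<bullet> curl v x = 0
    \<and> curl v x = s *\<^sub>R cross3 (v x) (dir_deriv (v x) v x)"
proof (intro ballI)
  fix x assume x: "x \<in> \<Omega>"
  have ss: "s * s = 1" using assms(2) by auto
  have "v differentiable (at x)"
    using assms(3) assms(1) x unfolding C2_on_def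
    by (simp add: differentiable_on_eq_differentiable_at)
  define D where "D = frechet_derivative v (at x)"
  have hv: "(v has_derivative D) (at x)" using \<open>v differentiable (at x)\<close>
    unfolding D_def by (rule frechet_derivative_works[THEN iffD1])
  define a where "a = v x"
  define g where "g = 1 - s * (norm a)\<^sup>2"
  have g0: "g > 0" using assms(4) x unfolding g_def a_def by auto
  define r where "r = sqrt g"
  have r0: "r > 0" and rr: "r * r = g" using g0 unfolding r_def by auto
  have P1: "pdiff i (\<lambda>y. v y $ k) x = D (axis i 1) $ k" for i k
    by (rule pdiff_eq, rule bounded_linear.has_derivative[OF bounded_linear_vec_nth hv])
  have P0: "pdiff i v x = D (axis i 1)" for i by (rule pdiff_eq[OF hv])
  have hn: "((\<lambda>y. (norm (v y))\<^sup>2) has_derivative (\<lambda>h. 2 * (a \<bullet> D h))) (at x)"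
  proof -
    have "((\<lambda>y. v y \<bullet> v y) has_derivative (\<lambda>h. v x \<bullet> D h + D h \<bullet> v x)) (at x)"
      by (rule has_derivative_inner[OF hv hv])
    then show ?thesis
      by (simp add: power2_norm_eq_inner a_def inner_commute)
  qed
  have P2: "pdiff i (\<lambda>y. (norm (v y))\<^sup>2) x = 2 * (a \<bullet> D (axis i 1))" for i
    by (rule pdiff_eq[OF hn])
  have hg: "((\<lambda>y. 1 - s * (norm (v y))\<^sup>2) has_derivative (\<lambda>h. 0 - s * (2 * (a \<bullet> D h)))) (at x)"
    by (intro has_derivative_diff has_derivative_const has_derivative_mult_right hn)
  have dsq: "DERIV (\<lambda>t. 1 / sqrt t) g :> - 1 / (2 * g * sqrt g)"
    using g0 by (auto intro!: derivative_eq_intros simp: field_simps power2_eq_square)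
  have hphi: "((\<lambda>y. 1 / sqrt (1 - s * (norm (v y))\<^sup>2)) has_derivative
      (\<lambda>h. (0 - s * (2 * (a \<bullet> D h))) * (- 1 / (2 * g * sqrt g)))) (at x)"
    using DERIV_compose_FDERIV[OF dsq[unfolded g_def a_def] hg[unfolded a_def]]
    unfolding g_def a_def by simp
  have P3: "pdiff i (\<lambda>y. ((1 / sqrt (1 - s * (norm (v y))\<^sup>2)) *\<^sub>R v y) $ k) x
     = (0 - s * (2 * (a \<bullet> D (axis i 1)))) * (- 1 / (2 * g * r)) * a $ k
       + (1 / r) * D (axis i 1) $ k" for i k
  proof -
    have "((\<lambda>y. (1 / sqrt (1 - s * (norm (v y))\<^sup>2)) * v y $ k) has_derivative
      (\<lambda>h. (1 / sqrt (1 - s * (norm (v x))\<^sup>2)) * D h $ k + 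
          (0 - s * (2 * (a \<bullet> D h))) * (- 1 / (2 * g * sqrt g)) * v x $ k)) (at x)"
      by (rule has_derivative_mult[OF hphi bounded_linear.has_derivative[OF bounded_linear_vec_nth hv]])
    from pdiff_eq[OF this, of i] show ?thesis
      by (simp add: r_def g_def a_def)
  qed
  show "(1 - s * (norm (v x))\<^sup>2) *\<^sub>R curl v x
        + s *\<^sub>R cross3 ((1/2) *\<^sub>R grad (\<lambda>y. (norm (v y))\<^sup>2) x) (v x) = 0
    \<and> v x \<bullet> curl v x = 0
    \<and> grad (\<lambda>y. (norm (v y))\<^sup>2) x \<bullet> curl v x = 0
    \<and> curl v x = s *\<^sub>R cross3 (v x) (dir_deriv (v x) v x)"
  proof -
    define F where "F = (\<lambda>y. (1 / sqrt (1 - s * (norm (v y))\<^sup>2)) *\<^sub>R v y)"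
    have H: "curl F x = 0" using assms(5) x unfolding F_def by auto
    define d where "d i = D (axis i 1)" for i
    have E1: "g * (d 2 $ 3 - d 3 $ 2) + s * ((a \<bullet> d 2) * a $ 3 - (a \<bullet> d 3) * a $ 2) = 0"
    proof -
      have "(g*r) * (curl F x $ 1) = g * (d 2 $ 3 - d 3 $ 2) + s * ((a \<bullet> d 2) * a $ 3 - (a \<bullet> d 3) * a $ 2)"
        unfolding curl_def F_def P3 d_def using r0 by (simp add: rr[symmetric] field_simps)
      then show ?thesis using H by simp
    qed
    have E2: "g * (d 3 $ 1 - d 1 $ 3) + s * ((a \<bullet> d 3) * a $ 1 - (a \<bullet> d 1) * a $ 3) = 0"
    proof -
      have "(g*r) * (curl F x $ 2) = g * (d 3 $ 1 - d 1 $ 3) + s * ((a \<bullet> d 3) * a $ 1 - (a \<bullet> d 1) * a $ 3)"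
        unfolding curl_def F_def P3 d_def using r0 by (simp add: rr[symmetric] field_simps)
      then show ?thesis using H by simp
    qed
    have E3: "g * (d 1 $ 2 - d 2 $ 1) + s * ((a \<bullet> d 1) * a $ 2 - (a \<bullet> d 2) * a $ 1) = 0"
    proof -
      have "(g*r) * (curl F x $ 3) = g * (d 1 $ 2 - d 2 $ 1) + s * ((a \<bullet> d 1) * a $ 2 - (a \<bullet> d 2) * a $ 1)"
        unfolding curl_def F_def P3 d_def using r0 by (simp add: rr[symmetric] field_simps)
      then show ?thesis using H by simp
    qed
    define c where "c = (vector [d 2$3 - d 3$2, d 3$1 - d 1$3, d 1$2 - d 2$1] :: real^3)"
    define G where "G = ((\<chi> i. a \<bullet> d i) :: real^3)"
    have cv: "curl v x = c" by (simp add: curl_def P1 d_def c_def)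
    have gv: "grad (\<lambda>y. (norm (v y))\<^sup>2) x = 2 *\<^sub>R G" by (simp add: grad_def P2 d_def G_def vec_eq_iff)
    have dv: "dir_deriv (v x) v x = (\<Sum>i\<in>UNIV. a$i *\<^sub>R d i)" by (simp add: dir_deriv_def P0 d_def a_def)
    have na: "(norm (v x))\<^sup>2 = a \<bullet> a" by (simp add: a_def power2_norm_eq_inner)
    have gg: "g = 1 - s * (a$1*a$1 + a$2*a$2 + a$3*a$3)" by (simp add: g_def power2_norm_eq_inner inner_vec_def sum_3)
    have E1': "g * c$1 + s * (G$2 * a$3 - G$3 * a$2) = 0" using E1 by (simp add: c_def G_def)
    have E2': "g * c$2 + s * (G$3 * a$1 - G$1 * a$3) = 0" using E2 by (simp add: c_def G_def)
    have E3': "g * c$3 + s * (G$1 * a$2 - G$2 * a$1) = 0" using E3 by (simp add: c_def G_def)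
    have ac: "a$1*c$1+a$2*c$2+a$3*c$3 = 0" and Gc: "G$1*c$1+G$2*c$2+G$3*c$3 = 0"
      using alg_all[OF ss gg g0 E1' E2' E3'] by auto
    have Gi: "G$i = a$1 * d i $1 + a$2 * d i $2 + a$3 * d i $3" for i
      by (simp add: G_def inner_vec_def sum_3)
    have c1: "c$1 = d 2$3 - d 3$2" and c2: "c$2 = d 3$1 - d 1$3" and c3: "c$3 = d 1$2 - d 2$1"
      by (simp_all add: c_def)
    have i: "g *\<^sub>R c + s *\<^sub>R cross3 G a = 0"
      using E1' E2' E3' by (simp add: vec_eq_iff forall_3 cross3_def algebra_simps)
    have iv: "c = s *\<^sub>R cross3 a (\<Sum>i\<in>UNIV. a$i *\<^sub>R d i)"
    proof -
      have "c$k = s * (cross3 a (\<Sum>i\<in>UNIV. a$i *\<^sub>R d i))$k" for k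
      proof -
        have A1: "c$1 = s * (a$2 * (a$1 * d 1$3 + a$2 * d 2$3 + a$3 * d 3$3) - a$3 * (a$1 * d 1$2 + a$2 * d 2$2 + a$3 * d 3$2))"
          using E1' E2' E3' ac ss gg unfolding Gi c1 c2 c3 by algebra
        have A2: "c$2 = s * (a$3 * (a$1 * d 1$1 + a$2 * d 2$1 + a$3 * d 3$1) - a$1 * (a$1 * d 1$3 + a$2 * d 2$3 + a$3 * d 3$3))"
          using E1' E2' E3' ac ss gg unfolding Gi c1 c2 c3 by algebra
        have A3: "c$3 = s * (a$1 * (a$1 * d 1$2 + a$2 * d 2$2 + a$3 * d 3$2) - a$2 * (a$1 * d 1$1 + a$2 * d 2$1 + a$3 * d 3$1))"
          using E1' E2' E3' ac ss gg unfolding Gi c1 c2 c3 by algebra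
        show ?thesis using A1 A2 A3 exhaust_3[of k]
          by (auto simp: cross3_def sum_3)
      qed
      then show ?thesis by (simp add: vec_eq_iff)
    qed
    have g': "1 - s * (a \<bullet> a) = g" by (simp add: g_def power2_norm_eq_inner)
    have G2: "cross3 ((1/2) *\<^sub>R (2 *\<^sub>R G)) a = cross3 G a" by simp
    show ?thesis
      unfolding cv gv dv na unfolding a_def[symmetric] g' G2
      using i iv ac Gc
      by (simp add: inner_vec_def sum_3)
  qed
qed

end
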